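(* Let $K$ be a non-commutative division ring, let $R:=K[X,Y]$ be the polynomial ring over $K$ in two independent central indeterminates $X,Y$, and let $a,b\in K$ with $ab-ba\neq 0$. Then the pair $(X+a,-(Y+b))\in R^2$ is unimodular (there exist $x',y'\in R$ with $(X+a)x'-(Y+b)y'=1$) but not admissible (it is not the first row of any invertible $2\times2$ matrix over $R$).
   Context: A pair $(x,y)\in R^2$ is unimodular if $xx'+yy'=1$ for some $x',y'\in R$, and admissible if it is the first row of some invertible $2\times 2$ matrix over $R$. *)

theory Defs
  imports "HOL-Algebra.UnivPoly"
begin

definition division_ring_alg :: "('a, 'm) ring_scheme \<Rightarrow> bool" where
  "division_ring_alg K \<longleftrightarrow> ring K \<and> \<one>\<^bsub>K\<^esub> \<noteq> \<zero>\<^bsub>K\<^esub> \<and> Units K = carrier K - {\<zero>\<^bsub>K\<^esub>}"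

text \<open>The polynomial ring K[X,Y] in two central indeterminates, realised as (K[X])[Y].\<close>
abbreviation UP2 :: "('a, 'm) ring_scheme \<Rightarrow> (nat \<Rightarrow> 'a, nat \<Rightarrow> nat \<Rightarrow> 'a) up_ring" where
  "UP2 K \<equiv> UP (UP K)"

definition constK :: "('a, 'm) ring_scheme \<Rightarrow> 'a \<Rightarrow> nat \<Rightarrow> nat \<Rightarrow> 'a" where
  "constK K c = monom (UP2 K) (monom (UP K) c 0) 0"

definition varX :: "('a, 'm) ring_scheme \<Rightarrow> nat \<Rightarrow> nat \<Rightarrow> 'a" where
  "varX K = monom (UP2 K) (monom (UP K) \<one>\<^bsub>K\<^esub> 1) 0"

definition varY :: "('a, 'm) ring_scheme \<Rightarrow> nat \<Rightarrow> nat \<Rightarrow> 'a" where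
  "varY K = monom (UP2 K) \<one>\<^bsub>UP K\<^esub> 1"

definition unimodular :: "('b, 'n) ring_scheme \<Rightarrow> 'b \<Rightarrow> 'b \<Rightarrow> bool" where
  "unimodular R x y \<longleftrightarrow> x \<in> carrier R \<and> y \<in> carrier R \<and>
     (\<exists>x'\<in>carrier R. \<exists>y'\<in>carrier R. x \<otimes>\<^bsub>R\<^esub> x' \<oplus>\<^bsub>R\<^esub> y \<otimes>\<^bsub>R\<^esub> y' = \<one>\<^bsub>R\<^esub>)"

definition mat2_invertible :: "('b, 'n) ring_scheme \<Rightarrow> 'b \<Rightarrow> 'b \<Rightarrow> 'b \<Rightarrow> 'b \<Rightarrow> bool" where
  "mat2_invertible R p q c d \<longleftrightarrow>
     (\<exists>e\<in>carrier R. \<exists>f\<in>carrier R. \<exists>g\<in>carrier R. \<exists>h\<in>carrier R.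
        p \<otimes>\<^bsub>R\<^esub> e \<oplus>\<^bsub>R\<^esub> q \<otimes>\<^bsub>R\<^esub> g = \<one>\<^bsub>R\<^esub> \<and>
        p \<otimes>\<^bsub>R\<^esub> f \<oplus>\<^bsub>R\<^esub> q \<otimes>\<^bsub>R\<^esub> h = \<zero>\<^bsub>R\<^esub> \<and>
        c \<otimes>\<^bsub>R\<^esub> e \<oplus>\<^bsub>R\<^esub> d \<otimes>\<^bsub>R\<^esub> g = \<zero>\<^bsub>R\<^esub> \<and>
        c \<otimes>\<^bsub>R\<^esub> f \<oplus>\<^bsub>R\<^esub> d \<otimes>\<^bsub>R\<^esub> h = \<one>\<^bsub>R\<^esub> \<and>
        e \<otimes>\<^bsub>R\<^esub> p \<oplus>\<^bsub>R\<^esub> f \<otimes>\<^bsub>R\<^esub> c = \<one>\<^bsub>R\<^esub> \<and>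
        e \<otimes>\<^bsub>R\<^esub> q \<oplus>\<^bsub>R\<^esub> f \<otimes>\<^bsub>R\<^esub> d = \<zero>\<^bsub>R\<^esub> \<and>
        g \<otimes>\<^bsub>R\<^esub> p \<oplus>\<^bsub>R\<^esub> h \<otimes>\<^bsub>R\<^esub> c = \<zero>\<^bsub>R\<^esub> \<and>
        g \<otimes>\<^bsub>R\<^esub> q \<oplus>\<^bsub>R\<^esub> h \<otimes>\<^bsub>R\<^esub> d = \<one>\<^bsub>R\<^esub>)"

definition admissible :: "('b, 'n) ring_scheme \<Rightarrow> 'b \<Rightarrow> 'b \<Rightarrow> bool" where
  "admissible R x y \<longleftrightarrow> x \<in> carrier R \<and> y \<in> carrier R \<and>
     (\<exists>c\<in>carrier R. \<exists>d\<in>carrier R. mat2_invertible R x y c d)"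

end

theory Submission imports Defs begin

context UP_ring begin
lemma nzd_lcoeff_mult:
  assumes nzd: "\<And>x y. x \<in> carrier R \<Longrightarrow> y \<in> carrier R \<Longrightarrow> x \<otimes> y = \<zero> \<Longrightarrow> x = \<zero> \<or> y = \<zero>"
  and R: "p \<in> carrier P" "q \<in> carrier P" and nz: "p \<noteq> \<zero>\<^bsub>P\<^esub>" "q \<noteq> \<zero>\<^bsub>P\<^esub>"
  shows "coeff P (p \<otimes>\<^bsub>P\<^esub> q) (deg R p + deg R q) \<noteq> \<zero>"
proof -
  let ?s = "(\<lambda>i. coeff P p i \<otimes> coeff P q (deg R p + deg R q - i))"
  have less_add_diff: "!!(k::nat) n m. k < n ==> m < n + m - k" by arith
    have "(\<Oplus>i \<in> {.. deg R p + deg R q}. ?s i)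
      = (\<Oplus>i \<in> {..< deg R p} \<union> {deg R p .. deg R p + deg R q}. ?s i)"
      by (simp only: ivl_disj_un_one)
    also have "... = (\<Oplus>i \<in> {deg R p .. deg R p + deg R q}. ?s i)"
      by (simp cong: R.finsum_cong add: R.finsum_Un_disjoint ivl_disj_int_one
        deg_aboveD less_add_diff R Pi_def)
    also have "...= (\<Oplus>i \<in> {deg R p} \<union> {deg R p <.. deg R p + deg R q}. ?s i)"
      by (simp only: ivl_disj_un_singleton)
    also have "... = coeff P p (deg R p) \<otimes> coeff P q (deg R q)"
      by (simp cong: R.finsum_cong add: deg_aboveD R Pi_def)
    finally have "(\<Oplus>i \<in> {.. deg R p + deg R q}. ?s i)
      = coeff P p (deg R p) \<otimes> coeff P q (deg R q)" .
    moreover have "coeff P p (deg R p) \<otimes> coeff P q (deg R q) \<noteq> \<zero>"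
      using nzd[of "coeff P p (deg R p)" "coeff P q (deg R q)"] lcoeff_nonzero[OF nz(1) R(1)]
        lcoeff_nonzero[OF nz(2) R(2)] R by auto
    ultimately show ?thesis using R by simp
qed

lemma nzd_deg_mult:
  assumes nzd: "\<And>x y. x \<in> carrier R \<Longrightarrow> y \<in> carrier R \<Longrightarrow> x \<otimes> y = \<zero> \<Longrightarrow> x = \<zero> \<or> y = \<zero>"
  and R: "p \<in> carrier P" "q \<in> carrier P" and nz: "p \<noteq> \<zero>\<^bsub>P\<^esub>" "q \<noteq> \<zero>\<^bsub>P\<^esub>"
  shows "deg R (p \<otimes>\<^bsub>P\<^esub> q) = deg R p + deg R q" "p \<otimes>\<^bsub>P\<^esub> q \<noteq> \<zero>\<^bsub>P\<^esub>"
proof -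
  have c: "coeff P (p \<otimes>\<^bsub>P\<^esub> q) (deg R p + deg R q) \<noteq> \<zero>"
    by (rule nzd_lcoeff_mult[OF nzd R nz])
  then show "p \<otimes>\<^bsub>P\<^esub> q \<noteq> \<zero>\<^bsub>P\<^esub>" by auto
  show "deg R (p \<otimes>\<^bsub>P\<^esub> q) = deg R p + deg R q"
    using deg_mult_ring[OF R] deg_belowI[OF c] R by simp
qed

lemma nzd_UP:
  assumes nzd: "\<And>x y. x \<in> carrier R \<Longrightarrow> y \<in> carrier R \<Longrightarrow> x \<otimes> y = \<zero> \<Longrightarrow> x = \<zero> \<or> y = \<zero>"
  shows "\<And>p q. p \<in> carrier P \<Longrightarrow> q \<in> carrier P \<Longrightarrow> p \<otimes>\<^bsub>P\<^esub> q = \<zero>\<^bsub>P\<^esub> \<Longrightarrow> p = \<zero>\<^bsub>P\<^esub> \<or> q = \<zero>\<^bsub>P\<^esub>"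
  using nzd_deg_mult(2)[OF nzd] by blast
end

lemma (in ring) key_alg:
  assumes c: "x \<in> carrier R" "y \<in> carrier R" "C \<in> carrier R" "Ci \<in> carrier R"
  and com: "x \<otimes> y = y \<otimes> x \<oplus> C" and inv: "C \<otimes> Ci = \<one>"
  shows "x \<otimes> (y \<otimes> Ci) \<oplus> (\<ominus> y) \<otimes> (x \<otimes> Ci) = \<one>"
    "x \<otimes> (\<one> \<ominus> y \<otimes> (Ci \<otimes> x)) \<oplus> (\<ominus> y) \<otimes> (\<ominus> (x \<otimes> (Ci \<otimes> x))) = \<zero>"
    "x \<otimes> (y \<otimes> (Ci \<otimes> y)) \<oplus> (\<ominus> y) \<otimes> (\<one> \<oplus> x \<otimes> (Ci \<otimes> y)) = \<zero>"
proof -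
  have h: "\<And>z. z \<in> carrier R \<Longrightarrow> x \<otimes> (y \<otimes> z) = y \<otimes> (x \<otimes> z) \<oplus> C \<otimes> z"
    using c com by (simp add: m_assoc[symmetric] l_distr)
  have h2: "\<And>z. z \<in> carrier R \<Longrightarrow> C \<otimes> (Ci \<otimes> z) = z"
    using c inv by (simp add: m_assoc[symmetric])
  show "x \<otimes> (y \<otimes> Ci) \<oplus> (\<ominus> y) \<otimes> (x \<otimes> Ci) = \<one>"
    using c by (simp add: h inv l_minus a_ac r_neg1 r_neg2 r_neg)
  show "x \<otimes> (\<one> \<ominus> y \<otimes> (Ci \<otimes> x)) \<oplus> (\<ominus> y) \<otimes> (\<ominus> (x \<otimes> (Ci \<otimes> x))) = \<zero>"
    using c by (simp add: h h2 r_distr minus_eq r_minus l_minus minus_add a_ac r_neg r_neg1 r_neg2)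
  show "x \<otimes> (y \<otimes> (Ci \<otimes> y)) \<oplus> (\<ominus> y) \<otimes> (\<one> \<oplus> x \<otimes> (Ci \<otimes> y)) = \<zero>"
    using c by (simp add: h h2 r_distr minus_eq r_minus l_minus minus_add a_ac r_neg r_neg1 r_neg2)
qed

lemma (in ring) diff0_eq:
  assumes "a \<in> carrier R" "b \<in> carrier R" "a \<oplus> \<ominus> b = \<zero>" shows "a = b"
proof -
  have "a = (a \<oplus> \<ominus> b) \<oplus> b" using assms(1,2) by (simp add: a_assoc l_neg)
  then show ?thesis using assms by simp
qed

lemma (in ring) vcomp:
  assumes c: "p \<in> carrier R" "q \<in> carrier R" "cc \<in> carrier R" "dd \<in> carrier R"
     "g \<in> carrier R" "h \<in> carrier R" "u \<in> carrier R" "v \<in> carrier R"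
  and e1: "g \<otimes> p \<oplus> h \<otimes> cc = \<zero>" and e2: "g \<otimes> q \<oplus> h \<otimes> dd = \<one>"
  and e3: "p \<otimes> u \<oplus> q \<otimes> v = \<zero>"
  shows "v = h \<otimes> (cc \<otimes> u \<oplus> dd \<otimes> v)"
proof -
  have "\<zero> = (g \<otimes> p \<oplus> h \<otimes> cc) \<otimes> u" using e1 c by simp
  also have "\<dots> = g \<otimes> (p \<otimes> u) \<oplus> h \<otimes> (cc \<otimes> u)" using c by (simp add: l_distr m_assoc)
  finally have z: "\<zero> = g \<otimes> (p \<otimes> u) \<oplus> h \<otimes> (cc \<otimes> u)" .
  have "v = (g \<otimes> q \<oplus> h \<otimes> dd) \<otimes> v" using e2 c by simp
  also have "\<dots> = g \<otimes> (q \<otimes> v) \<oplus> h \<otimes> (dd \<otimes> v)" using c by (simp add: l_distr m_assoc)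
  also have "\<dots> = \<zero> \<oplus> (g \<otimes> (q \<otimes> v) \<oplus> h \<otimes> (dd \<otimes> v))" using c by simp
  also have "\<dots> = (g \<otimes> (p \<otimes> u) \<oplus> h \<otimes> (cc \<otimes> u)) \<oplus> (g \<otimes> (q \<otimes> v) \<oplus> h \<otimes> (dd \<otimes> v))"
    using z by simp
  also have "\<dots> = g \<otimes> (p \<otimes> u \<oplus> q \<otimes> v) \<oplus> h \<otimes> (cc \<otimes> u \<oplus> dd \<otimes> v)"
    using c by (simp add: r_distr a_ac)
  also have "\<dots> = h \<otimes> (cc \<otimes> u \<oplus> dd \<otimes> v)" using e3 c by simp
  finally show ?thesis .
qed

lemma (in ring) final_alg:
  assumes c: "xi \<in> carrier R" "f1 \<in> carrier R" "r \<in> carrier R" "ci \<in> carrier R" "b \<in> carrier R"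
  and "(xi \<otimes> f1) \<otimes> r = \<one> \<oplus> xi \<otimes> (ci \<otimes> b)"
  shows "xi \<otimes> (f1 \<otimes> r \<ominus> ci \<otimes> b) = \<one>"
proof -
  have "xi \<otimes> (f1 \<otimes> r \<ominus> ci \<otimes> b) = (xi \<otimes> f1) \<otimes> r \<oplus> \<ominus> (xi \<otimes> (ci \<otimes> b))"
    using c by (simp add: minus_eq r_distr r_minus m_assoc)
  also have "\<dots> = \<one>" using assms by (simp add: a_assoc r_neg)
  finally show ?thesis .
qed

theorem mainTheorem7:
  fixes K :: "('a, 'm) ring_scheme" and a b :: 'a
  assumes "division_ring_alg K"
    and "a \<in> carrier K" and "b \<in> carrier K"
    and "a \<otimes>\<^bsub>K\<^esub> b \<ominus>\<^bsub>K\<^esub> b \<otimes>\<^bsub>K\<^esub> a \<noteq> \<zero>\<^bsub>K\<^esub>"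
  shows "unimodular (UP2 K) (varX K \<oplus>\<^bsub>UP2 K\<^esub> constK K a)
           (\<ominus>\<^bsub>UP2 K\<^esub> (varY K \<oplus>\<^bsub>UP2 K\<^esub> constK K b))
       \<and> \<not> admissible (UP2 K) (varX K \<oplus>\<^bsub>UP2 K\<^esub> constK K a)
           (\<ominus>\<^bsub>UP2 K\<^esub> (varY K \<oplus>\<^bsub>UP2 K\<^esub> constK K b))"
proof -
  note DR = assms(1)[unfolded division_ring_alg_def]
  have rK: "ring K" using DR by simp
  interpret K: ring K by (rule rK)
  interpret U1: UP_ring K "UP K" by unfold_locales
  have rP1: "ring (UP K)" by (rule U1.UP_ring)
  interpret U2: UP_ring "UP K" "UP (UP K)" by unfold_locales
  have rP2: "ring (UP (UP K))" by (rule U2.UP_ring)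
  have ab: "a \<in> carrier K" "b \<in> carrier K" by fact+
  have one0: "\<one>\<^bsub>K\<^esub> \<noteq> \<zero>\<^bsub>K\<^esub>" using DR by simp
  have nzdK: "\<And>x y. x \<in> carrier K \<Longrightarrow> y \<in> carrier K \<Longrightarrow> x \<otimes>\<^bsub>K\<^esub> y = \<zero>\<^bsub>K\<^esub> \<Longrightarrow> x = \<zero>\<^bsub>K\<^esub> \<or> y = \<zero>\<^bsub>K\<^esub>"
  proof -
    fix x y assume xy: "x \<in> carrier K" "y \<in> carrier K" "x \<otimes>\<^bsub>K\<^esub> y = \<zero>\<^bsub>K\<^esub>"
    show "x = \<zero>\<^bsub>K\<^esub> \<or> y = \<zero>\<^bsub>K\<^esub>"
    proof (cases "x = \<zero>\<^bsub>K\<^esub>")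
      case False
      then have u: "x \<in> Units K" using DR xy by auto
      have "y = (inv\<^bsub>K\<^esub> x \<otimes>\<^bsub>K\<^esub> x) \<otimes>\<^bsub>K\<^esub> y" using u xy by simp
      also have "\<dots> = inv\<^bsub>K\<^esub> x \<otimes>\<^bsub>K\<^esub> (x \<otimes>\<^bsub>K\<^esub> y)" by (metis K.Units_inv_closed K.m_assoc u xy(1) xy(2))
      also have "\<dots> = \<zero>\<^bsub>K\<^esub>" using xy u by simp
      finally show ?thesis by simp
    qed simp
  qed
  have nzd1: "\<And>p q. p \<in> carrier (UP K) \<Longrightarrow> q \<in> carrier (UP K) \<Longrightarrow> p \<otimes>\<^bsub>UP K\<^esub> q = \<zero>\<^bsub>UP K\<^esub>
      \<Longrightarrow> p = \<zero>\<^bsub>UP K\<^esub> \<or> q = \<zero>\<^bsub>UP K\<^esub>"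
    using U1.nzd_UP[OF nzdK] by blast
  define c where "c = a \<otimes>\<^bsub>K\<^esub> b \<ominus>\<^bsub>K\<^esub> b \<otimes>\<^bsub>K\<^esub> a"
  have cK: "c \<in> carrier K" unfolding c_def using ab by simp
  have cU: "c \<in> Units K" using DR cK assms(4) c_def by auto
  define ci where "ci = inv\<^bsub>K\<^esub> c"
  have ciK: "ci \<in> carrier K" using cU ci_def by simp
  have cci: "c \<otimes>\<^bsub>K\<^esub> ci = \<one>\<^bsub>K\<^esub>" using cU ci_def by simp
  have ci0: "ci \<noteq> \<zero>\<^bsub>K\<^esub>" using cci cK one0 by auto
  define xi where "xi = monom (UP K) \<one>\<^bsub>K\<^esub> 1 \<oplus>\<^bsub>UP K\<^esub> monom (UP K) a 0"
  have xiC: "xi \<in> carrier (UP K)" unfolding xi_def using ab by simp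
  have xi1: "coeff (UP K) xi 1 = \<one>\<^bsub>K\<^esub>" unfolding xi_def using ab by simp
  have xi0: "xi \<noteq> \<zero>\<^bsub>UP K\<^esub>" using xi1 one0 by auto
  have degxi: "1 \<le> deg K xi" using U1.deg_belowI[of 1 xi] xi1 one0 xiC by simp
  define b' where "b' = monom (UP K) b 0"
  define c' where "c' = monom (UP K) c 0"
  define ci' where "ci' = monom (UP K) ci 0"
  have b'C: "b' \<in> carrier (UP K)" "c' \<in> carrier (UP K)" "ci' \<in> carrier (UP K)"
    unfolding b'_def c'_def ci'_def using ab cK ciK by simp_all
  have ci'0: "ci' \<noteq> \<zero>\<^bsub>UP K\<^esub>"
  proof
    assume "ci' = \<zero>\<^bsub>UP K\<^esub>"
    then have "coeff (UP K) ci' 0 = \<zero>\<^bsub>K\<^esub>" by simp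
    then show False using ciK ci0 ci'_def by simp
  qed
  have comm1: "xi \<otimes>\<^bsub>UP K\<^esub> b' = b' \<otimes>\<^bsub>UP K\<^esub> xi \<oplus>\<^bsub>UP K\<^esub> c'"
  proof -
    have e1: "monom (UP K) \<one>\<^bsub>K\<^esub> (Suc 0) \<otimes>\<^bsub>UP K\<^esub> b' = monom (UP K) b 1"
      using U1.monom_mult[of "\<one>\<^bsub>K\<^esub>" b 1 0] ab by (simp add: b'_def)
    have e2: "b' \<otimes>\<^bsub>UP K\<^esub> monom (UP K) \<one>\<^bsub>K\<^esub> (Suc 0) = monom (UP K) b 1"
      using U1.monom_mult[of b "\<one>\<^bsub>K\<^esub>" 0 1] ab by (simp add: b'_def)
    have e3: "monom (UP K) a 0 \<otimes>\<^bsub>UP K\<^esub> b' = monom (UP K) (a \<otimes>\<^bsub>K\<^esub> b) 0"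
      using U1.monom_mult[of a b 0 0] ab by (simp add: b'_def)
    have e4: "b' \<otimes>\<^bsub>UP K\<^esub> monom (UP K) a 0 = monom (UP K) (b \<otimes>\<^bsub>K\<^esub> a) 0"
      using U1.monom_mult[of b a 0 0] ab by (simp add: b'_def)
    have e5: "c' = monom (UP K) (a \<otimes>\<^bsub>K\<^esub> b) 0 \<oplus>\<^bsub>UP K\<^esub> \<ominus>\<^bsub>UP K\<^esub> monom (UP K) (b \<otimes>\<^bsub>K\<^esub> a) 0"
      unfolding c'_def c_def using ab by (simp add: K.minus_eq)
    show ?thesis unfolding xi_def using ab b'C(1)
      by (simp add: U1.l_distr U1.r_distr e1 e2 e3 e4 e5 U1.a_ac U1.r_neg U1.r_neg1 U1.r_neg2)
  qed
  define x where "x = monom (UP (UP K)) xi 0"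
  define Y where "Y = monom (UP (UP K)) \<one>\<^bsub>UP K\<^esub> 1"
  define Bp where "Bp = monom (UP (UP K)) b' 0"
  define y where "y = Y \<oplus>\<^bsub>UP (UP K)\<^esub> Bp"
  define C where "C = monom (UP (UP K)) c' 0"
  define Ci where "Ci = monom (UP (UP K)) ci' 0"
  have xC: "x \<in> carrier (UP (UP K))" "Y \<in> carrier (UP (UP K))" "Bp \<in> carrier (UP (UP K))"
    "y \<in> carrier (UP (UP K))" "C \<in> carrier (UP (UP K))" "Ci \<in> carrier (UP (UP K))"
    unfolding x_def Y_def Bp_def y_def C_def Ci_def using xiC b'C by simp_all
  have hx: "varX K \<oplus>\<^bsub>UP2 K\<^esub> constK K a = x"
    unfolding varX_def constK_def x_def xi_def using ab
    by simp
  have hy: "varY K \<oplus>\<^bsub>UP2 K\<^esub> constK K b = y"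
    unfolding varY_def constK_def y_def Y_def Bp_def b'_def by simp
  have xY: "x \<otimes>\<^bsub>UP (UP K)\<^esub> Y = monom (UP (UP K)) xi 1"
    using U2.monom_mult[of xi "\<one>\<^bsub>UP K\<^esub>" 0 1] xiC unfolding x_def Y_def by simp
  have Yx: "Y \<otimes>\<^bsub>UP (UP K)\<^esub> x = monom (UP (UP K)) xi 1"
    using U2.monom_mult[of "\<one>\<^bsub>UP K\<^esub>" xi 1 0] xiC unfolding x_def Y_def by simp
  have xB: "x \<otimes>\<^bsub>UP (UP K)\<^esub> Bp = monom (UP (UP K)) (xi \<otimes>\<^bsub>UP K\<^esub> b') 0"
    using U2.monom_mult[of xi b' 0 0] xiC b'C unfolding x_def Bp_def by simp
  have Bx: "Bp \<otimes>\<^bsub>UP (UP K)\<^esub> x = monom (UP (UP K)) (b' \<otimes>\<^bsub>UP K\<^esub> xi) 0"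
    using U2.monom_mult[of b' xi 0 0] xiC b'C unfolding x_def Bp_def by simp
  have com: "x \<otimes>\<^bsub>UP (UP K)\<^esub> y = y \<otimes>\<^bsub>UP (UP K)\<^esub> x \<oplus>\<^bsub>UP (UP K)\<^esub> C"
  proof -
    have "x \<otimes>\<^bsub>UP (UP K)\<^esub> y = monom (UP (UP K)) xi 1 \<oplus>\<^bsub>UP (UP K)\<^esub> monom (UP (UP K)) (xi \<otimes>\<^bsub>UP K\<^esub> b') 0"
      unfolding y_def using xC by (simp add: U2.r_distr xY xB)
    also have "\<dots> = monom (UP (UP K)) xi 1 \<oplus>\<^bsub>UP (UP K)\<^esub> (monom (UP (UP K)) (b' \<otimes>\<^bsub>UP K\<^esub> xi) 0 \<oplus>\<^bsub>UP (UP K)\<^esub> C)"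
      unfolding comm1 C_def using xiC b'C by simp
    also have "\<dots> = y \<otimes>\<^bsub>UP (UP K)\<^esub> x \<oplus>\<^bsub>UP (UP K)\<^esub> C"
      unfolding y_def using xC xiC b'C by (simp add: U2.l_distr Yx Bx U2.a_assoc)
    finally show ?thesis .
  qed
  have CCi: "C \<otimes>\<^bsub>UP (UP K)\<^esub> Ci = \<one>\<^bsub>UP (UP K)\<^esub>"
  proof -
    have "c' \<otimes>\<^bsub>UP K\<^esub> ci' = \<one>\<^bsub>UP K\<^esub>"
      using U1.monom_mult[of c ci 0 0] cK ciK cci unfolding c'_def ci'_def by simp
    then show ?thesis
      using U2.monom_mult[of c' ci' 0 0] b'C unfolding C_def Ci_def by simp
  qed
  note KA = ring.key_alg[OF rP2 xC(1) xC(4) xC(5) xC(6) com CCi]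
  have unimod: "unimodular (UP2 K) x (\<ominus>\<^bsub>UP2 K\<^esub> y)"
    unfolding unimodular_def
    using KA(1) xC by (intro conjI bexI[of _ "y \<otimes>\<^bsub>UP (UP K)\<^esub> Ci"] bexI[of _ "x \<otimes>\<^bsub>UP (UP K)\<^esub> Ci"]) simp_all
  have nadm: "\<not> admissible (UP2 K) x (\<ominus>\<^bsub>UP2 K\<^esub> y)"
  proof
    assume "admissible (UP2 K) x (\<ominus>\<^bsub>UP2 K\<^esub> y)"
    then obtain cc dd where ccC: "cc \<in> carrier (UP (UP K))" "dd \<in> carrier (UP (UP K))"
      and mi: "mat2_invertible (UP2 K) x (\<ominus>\<^bsub>UP2 K\<^esub> y) cc dd"
      unfolding admissible_def by blast
    then obtain e f g h where efC: "e \<in> carrier (UP (UP K))" "f \<in> carrier (UP (UP K))"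
       "g \<in> carrier (UP (UP K))" "h \<in> carrier (UP (UP K))"
      and E2: "x \<otimes>\<^bsub>UP (UP K)\<^esub> f \<oplus>\<^bsub>UP (UP K)\<^esub> (\<ominus>\<^bsub>UP (UP K)\<^esub> y) \<otimes>\<^bsub>UP (UP K)\<^esub> h = \<zero>\<^bsub>UP (UP K)\<^esub>"
      and E7: "g \<otimes>\<^bsub>UP (UP K)\<^esub> x \<oplus>\<^bsub>UP (UP K)\<^esub> h \<otimes>\<^bsub>UP (UP K)\<^esub> cc = \<zero>\<^bsub>UP (UP K)\<^esub>"
      and E8: "g \<otimes>\<^bsub>UP (UP K)\<^esub> (\<ominus>\<^bsub>UP (UP K)\<^esub> y) \<oplus>\<^bsub>UP (UP K)\<^esub> h \<otimes>\<^bsub>UP (UP K)\<^esub> dd = \<one>\<^bsub>UP (UP K)\<^esub>"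
      unfolding mat2_invertible_def by blast
    have myC: "\<ominus>\<^bsub>UP (UP K)\<^esub> y \<in> carrier (UP (UP K))" using xC by simp
    have VC: "\<And>u v. u \<in> carrier (UP (UP K)) \<Longrightarrow> v \<in> carrier (UP (UP K)) \<Longrightarrow>
        x \<otimes>\<^bsub>UP (UP K)\<^esub> u \<oplus>\<^bsub>UP (UP K)\<^esub> (\<ominus>\<^bsub>UP (UP K)\<^esub> y) \<otimes>\<^bsub>UP (UP K)\<^esub> v = \<zero>\<^bsub>UP (UP K)\<^esub> \<Longrightarrow>
        v = h \<otimes>\<^bsub>UP (UP K)\<^esub> (cc \<otimes>\<^bsub>UP (UP K)\<^esub> u \<oplus>\<^bsub>UP (UP K)\<^esub> dd \<otimes>\<^bsub>UP (UP K)\<^esub> v)"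
      using ring.vcomp[OF rP2 xC(1) myC ccC efC(3) efC(4)] E7 E8 by blast
    define w1 where "w1 = \<ominus>\<^bsub>UP K\<^esub> (xi \<otimes>\<^bsub>UP K\<^esub> (ci' \<otimes>\<^bsub>UP K\<^esub> xi))"
    have w1C: "w1 \<in> carrier (UP K)" unfolding w1_def using xiC b'C by simp
    have w10: "w1 \<noteq> \<zero>\<^bsub>UP K\<^esub>"
    proof
      assume w: "w1 = \<zero>\<^bsub>UP K\<^esub>"
      have "xi \<otimes>\<^bsub>UP K\<^esub> (ci' \<otimes>\<^bsub>UP K\<^esub> xi) = \<ominus>\<^bsub>UP K\<^esub> w1"
        unfolding w1_def using xiC b'C by simp
      also have "\<dots> = \<zero>\<^bsub>UP K\<^esub>" using w by simp
      finally have "xi \<otimes>\<^bsub>UP K\<^esub> (ci' \<otimes>\<^bsub>UP K\<^esub> xi) = \<zero>\<^bsub>UP K\<^esub>" .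
      then show False using nzd1[of xi "ci' \<otimes>\<^bsub>UP K\<^esub> xi"] nzd1[of ci' xi] xiC b'C xi0 ci'0 by auto
    qed
    define v1 where "v1 = \<ominus>\<^bsub>UP (UP K)\<^esub> (x \<otimes>\<^bsub>UP (UP K)\<^esub> (Ci \<otimes>\<^bsub>UP (UP K)\<^esub> x))"
    define u1 where "u1 = \<one>\<^bsub>UP (UP K)\<^esub> \<ominus>\<^bsub>UP (UP K)\<^esub> y \<otimes>\<^bsub>UP (UP K)\<^esub> (Ci \<otimes>\<^bsub>UP (UP K)\<^esub> x)"
    have uv1C: "u1 \<in> carrier (UP (UP K))" "v1 \<in> carrier (UP (UP K))"
      unfolding u1_def v1_def using xC by simp_all
    have hv1: "v1 = monom (UP (UP K)) w1 0"
    proof -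
      have "Ci \<otimes>\<^bsub>UP (UP K)\<^esub> x = monom (UP (UP K)) (ci' \<otimes>\<^bsub>UP K\<^esub> xi) 0"
        using U2.monom_mult[of ci' xi 0 0] xiC b'C unfolding x_def Ci_def by simp
      moreover have "x \<otimes>\<^bsub>UP (UP K)\<^esub> monom (UP (UP K)) (ci' \<otimes>\<^bsub>UP K\<^esub> xi) 0
          = monom (UP (UP K)) (xi \<otimes>\<^bsub>UP K\<^esub> (ci' \<otimes>\<^bsub>UP K\<^esub> xi)) 0"
        using U2.monom_mult[of xi "ci' \<otimes>\<^bsub>UP K\<^esub> xi" 0 0] xiC b'C unfolding x_def by simp
      ultimately show ?thesis unfolding v1_def w1_def using xiC b'C by simp
    qed
    define r1 where "r1 = cc \<otimes>\<^bsub>UP (UP K)\<^esub> u1 \<oplus>\<^bsub>UP (UP K)\<^esub> dd \<otimes>\<^bsub>UP (UP K)\<^esub> v1"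
    have r1C: "r1 \<in> carrier (UP (UP K))" unfolding r1_def using ccC uv1C by simp
    have v1eq: "v1 = h \<otimes>\<^bsub>UP (UP K)\<^esub> r1"
      unfolding r1_def using VC[OF uv1C] KA(2) unfolding u1_def v1_def by simp
    have v10: "v1 \<noteq> \<zero>\<^bsub>UP (UP K)\<^esub>"
    proof
      assume "v1 = \<zero>\<^bsub>UP (UP K)\<^esub>"
      then have "coeff (UP (UP K)) v1 0 = \<zero>\<^bsub>UP K\<^esub>" by simp
      then show False using hv1 w1C w10 by simp
    qed
    have h0: "h \<noteq> \<zero>\<^bsub>UP (UP K)\<^esub>" using v10 v1eq r1C by auto
    have r10: "r1 \<noteq> \<zero>\<^bsub>UP (UP K)\<^esub>" using v10 v1eq efC by auto
    have "deg (UP K) v1 = deg (UP K) h + deg (UP K) r1"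
      unfolding v1eq by (rule U2.nzd_deg_mult(1)[OF nzd1 efC(4) r1C h0 r10])
    moreover have "deg (UP K) v1 = 0" using hv1 w1C by simp
    ultimately have dh: "deg (UP K) h = 0" by simp
    define H where "H = coeff (UP (UP K)) h 0"
    have HC: "H \<in> carrier (UP K)" unfolding H_def using efC by simp
    have hH: "h = monom (UP (UP K)) H 0"
      unfolding H_def by (rule U2.deg_zero_impl_monom[OF efC(4) dh])
    have xfyh: "x \<otimes>\<^bsub>UP (UP K)\<^esub> f = y \<otimes>\<^bsub>UP (UP K)\<^esub> h"
      using ring.diff0_eq[OF rP2, of "x \<otimes>\<^bsub>UP (UP K)\<^esub> f" "y \<otimes>\<^bsub>UP (UP K)\<^esub> h"] E2 xC efC
      by (simp add: U2.l_minus)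
    define f1 where "f1 = coeff (UP (UP K)) f 1"
    have f1C: "f1 \<in> carrier (UP K)" unfolding f1_def using efC by simp
    have c1: "coeff (UP (UP K)) (x \<otimes>\<^bsub>UP (UP K)\<^esub> f) 1 = xi \<otimes>\<^bsub>UP K\<^esub> f1"
      using U2.coeff_monom_mult[of xi f 0 1] xiC efC unfolding x_def f1_def by simp
    have yh: "y \<otimes>\<^bsub>UP (UP K)\<^esub> h = monom (UP (UP K)) H 1 \<oplus>\<^bsub>UP (UP K)\<^esub> monom (UP (UP K)) (b' \<otimes>\<^bsub>UP K\<^esub> H) 0"
    proof -
      have "Y \<otimes>\<^bsub>UP (UP K)\<^esub> h = monom (UP (UP K)) H 1"
        using U2.monom_mult[of "\<one>\<^bsub>UP K\<^esub>" H 1 0] HC unfolding Y_def hH by simp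
      moreover have "Bp \<otimes>\<^bsub>UP (UP K)\<^esub> h = monom (UP (UP K)) (b' \<otimes>\<^bsub>UP K\<^esub> H) 0"
        using U2.monom_mult[of b' H 0 0] HC b'C unfolding Bp_def hH by simp
      ultimately show ?thesis unfolding y_def using xC efC by (simp add: U2.l_distr)
    qed
    have HX: "H = xi \<otimes>\<^bsub>UP K\<^esub> f1"
    proof -
      have "coeff (UP (UP K)) (y \<otimes>\<^bsub>UP (UP K)\<^esub> h) 1 = H"
        unfolding yh using HC b'C by simp
      then show ?thesis using c1 xfyh by simp
    qed
    define u2 where "u2 = y \<otimes>\<^bsub>UP (UP K)\<^esub> (Ci \<otimes>\<^bsub>UP (UP K)\<^esub> y)"
    define v2 where "v2 = \<one>\<^bsub>UP (UP K)\<^esub> \<oplus>\<^bsub>UP (UP K)\<^esub> x \<otimes>\<^bsub>UP (UP K)\<^esub> (Ci \<otimes>\<^bsub>UP (UP K)\<^esub> y)"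
    have uv2C: "u2 \<in> carrier (UP (UP K))" "v2 \<in> carrier (UP (UP K))"
      unfolding u2_def v2_def using xC by simp_all
    define r2 where "r2 = cc \<otimes>\<^bsub>UP (UP K)\<^esub> u2 \<oplus>\<^bsub>UP (UP K)\<^esub> dd \<otimes>\<^bsub>UP (UP K)\<^esub> v2"
    have r2C: "r2 \<in> carrier (UP (UP K))" unfolding r2_def using ccC uv2C by simp
    have v2eq: "v2 = h \<otimes>\<^bsub>UP (UP K)\<^esub> r2"
      unfolding r2_def using VC[OF uv2C] KA(3) unfolding u2_def v2_def by simp
    have cv2a: "coeff (UP (UP K)) v2 0 = H \<otimes>\<^bsub>UP K\<^esub> coeff (UP (UP K)) r2 0"
      using U2.coeff_monom_mult[of H r2 0 0] HC r2C v2eq hH by simp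
    have xCy: "x \<otimes>\<^bsub>UP (UP K)\<^esub> (Ci \<otimes>\<^bsub>UP (UP K)\<^esub> y) =
        monom (UP (UP K)) (xi \<otimes>\<^bsub>UP K\<^esub> ci') 1 \<oplus>\<^bsub>UP (UP K)\<^esub> monom (UP (UP K)) (xi \<otimes>\<^bsub>UP K\<^esub> (ci' \<otimes>\<^bsub>UP K\<^esub> b')) 0"
    proof -
      have a1: "Ci \<otimes>\<^bsub>UP (UP K)\<^esub> Y = monom (UP (UP K)) ci' 1"
        using U2.monom_mult[of ci' "\<one>\<^bsub>UP K\<^esub>" 0 1] b'C unfolding Ci_def Y_def by simp
      have a2: "Ci \<otimes>\<^bsub>UP (UP K)\<^esub> Bp = monom (UP (UP K)) (ci' \<otimes>\<^bsub>UP K\<^esub> b') 0"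
        using U2.monom_mult[of ci' b' 0 0] b'C unfolding Ci_def Bp_def by simp
      have a3: "x \<otimes>\<^bsub>UP (UP K)\<^esub> monom (UP (UP K)) ci' (Suc 0) = monom (UP (UP K)) (xi \<otimes>\<^bsub>UP K\<^esub> ci') 1"
        using U2.monom_mult[of xi ci' 0 1] b'C xiC unfolding x_def by simp
      have a4: "x \<otimes>\<^bsub>UP (UP K)\<^esub> monom (UP (UP K)) (ci' \<otimes>\<^bsub>UP K\<^esub> b') 0 = monom (UP (UP K)) (xi \<otimes>\<^bsub>UP K\<^esub> (ci' \<otimes>\<^bsub>UP K\<^esub> b')) 0"
        using U2.monom_mult[of xi "ci' \<otimes>\<^bsub>UP K\<^esub> b'" 0 0] b'C xiC unfolding x_def by simp
      have "Ci \<otimes>\<^bsub>UP (UP K)\<^esub> y = monom (UP (UP K)) ci' 1 \<oplus>\<^bsub>UP (UP K)\<^esub> monom (UP (UP K)) (ci' \<otimes>\<^bsub>UP K\<^esub> b') 0"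
        unfolding y_def using xC by (simp add: U2.r_distr a1 a2)
      then show ?thesis using xC b'C xiC by (simp add: U2.r_distr a3 a4)
    qed
    have cv2b: "coeff (UP (UP K)) v2 0 = \<one>\<^bsub>UP K\<^esub> \<oplus>\<^bsub>UP K\<^esub> xi \<otimes>\<^bsub>UP K\<^esub> (ci' \<otimes>\<^bsub>UP K\<^esub> b')"
      unfolding v2_def xCy using xiC b'C by simp
    have fin: "xi \<otimes>\<^bsub>UP K\<^esub> (f1 \<otimes>\<^bsub>UP K\<^esub> coeff (UP (UP K)) r2 0 \<ominus>\<^bsub>UP K\<^esub> ci' \<otimes>\<^bsub>UP K\<^esub> b') = \<one>\<^bsub>UP K\<^esub>"
      using ring.final_alg[OF rP1 xiC f1C _ b'C(3) b'C(1), of "coeff (UP (UP K)) r2 0"]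
        cv2a cv2b HX r2C by simp
    define z where "z = f1 \<otimes>\<^bsub>UP K\<^esub> coeff (UP (UP K)) r2 0 \<ominus>\<^bsub>UP K\<^esub> ci' \<otimes>\<^bsub>UP K\<^esub> b'"
    have zC: "z \<in> carrier (UP K)" unfolding z_def using f1C r2C b'C by simp
    have fin2: "xi \<otimes>\<^bsub>UP K\<^esub> z = \<one>\<^bsub>UP K\<^esub>" using fin z_def by simp
    show False
    proof (cases "z = \<zero>\<^bsub>UP K\<^esub>")
      case True
      then have "\<one>\<^bsub>UP K\<^esub> = \<zero>\<^bsub>UP K\<^esub>" using fin2 xiC by simp
      then have "coeff (UP K) \<one>\<^bsub>UP K\<^esub> 0 = coeff (UP K) \<zero>\<^bsub>UP K\<^esub> 0" by simp
      then show False using one0 by simp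
    next
      case False
      have "deg K (xi \<otimes>\<^bsub>UP K\<^esub> z) = deg K xi + deg K z"
        using U1.nzd_deg_mult(1)[OF nzdK xiC zC xi0 False] .
      then show False using fin2 degxi by simp
    qed
  qed
  show ?thesis using unimod nadm hx hy by simp
qed

end
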